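(* Let $n$ be a non-negative integer and let $a,b$ be integers with $\gcd(a,b)=1$, $b\neq 0$ and $b\neq\pm1$. Let $T_N(a,b)=\sum_{k=0}^{\lfloor N/2\rfloor}\binom{N}{k}\binom{N-k}{k}a^k b^{N-2k}$ (the generalized central trinomial coefficient, i.e. the coefficient of $x^N$ in $(x^2+bx+a)^N$). Then $$\omega_b\big(T_{2n}(a,b)\big)=\omega_b\Big(\binom{2n}{n}\Big),\qquad \omega_b\big(T_{2n+1}(a,b)\big)=1+\omega_b\Big((2n+1)\binom{2n}{n}\Big).$$
   Context: For an integer $x$ with $x\neq 0,\pm1$ and a nonzero integer $y$, $\omega_x(y)$ denotes the largest non-negative integer $e$ such that $x^e$ divides $y$. *)

theory Defs
  imports "HOL-Computational_Algebra.Computational_Algebra"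
begin

definition gen_trinomial :: "nat \<Rightarrow> int \<Rightarrow> int \<Rightarrow> int" where
  "gen_trinomial N a b =
     (\<Sum>k = 0..N div 2. int (N choose k) * int ((N - k) choose k) * a ^ k * b ^ (N - 2 * k))"

abbreviation omega :: "int \<Rightarrow> int \<Rightarrow> nat" where
  "omega x y \<equiv> multiplicity x y"

end

theory Submission
  imports Defs
begin


lemma key:
  fixes b M D X :: int and e s :: nat
  assumes MD: "M * D = b ^ (e + s) * X" and D: "D > 0" and s: "s \<ge> 1"
    and nd: "\<And>p. prime p \<Longrightarrow> p dvd b \<Longrightarrow> \<not> p ^ s dvd D"
    and b0: "b \<noteq> 0"
  shows "b ^ (e + 1) dvd M"
proof (cases "M = 0")
  case True then show ?thesis by simp
next
  case M0: False
  have X0: "X \<noteq> 0" using MD M0 D b0 by auto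
  show ?thesis
  proof (rule multiplicity_le_imp_dvd)
    show "b ^ (e + 1) \<noteq> 0" using b0 by simp
    fix p :: int assume p: "prime p"
    show "multiplicity p (b ^ (e + 1)) \<le> multiplicity p M"
    proof (cases "p dvd b")
      case False
      then have "multiplicity p b = 0" by (simp add: not_dvd_imp_multiplicity_0)
      moreover have "multiplicity p (b ^ (e + 1)) = (e + 1) * multiplicity p b"
        by (rule prime_elem_multiplicity_power_distrib) (use p b0 in auto)
      ultimately show ?thesis by simp
    next
      case True
      define v where "v = multiplicity p b"
      have pnu: "\<not> is_unit p" using p not_prime_unit by blast
      have v1: "v \<ge> 1" unfolding v_def using multiplicity_geI[OF b0 pnu, of 1] True by simp
      have pe: "prime_elem p" using p unfolding prime_def by blast
      have "multiplicity p (M * D) = multiplicity p M + multiplicity p D"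
        using pe M0 D by (simp add: prime_elem_multiplicity_mult_distrib)
      moreover have "multiplicity p (b ^ (e + s) * X) = (e + s) * v + multiplicity p X"
        using pe X0 b0 by (simp add: prime_elem_multiplicity_mult_distrib prime_elem_multiplicity_power_distrib v_def)
      moreover have "multiplicity p D < s" using multiplicity_lessI[of D p s] D pnu nd[OF p True] by auto
      moreover have "multiplicity p (b ^ (e + 1)) = (e + 1) * v"
        unfolding v_def by (rule prime_elem_multiplicity_power_distrib) (use pe b0 in auto)
      moreover have "s - 1 \<le> (s - 1) * v" using v1 by simp
      moreover have "multiplicity p (M * D) = multiplicity p (b ^ (e + s) * X)" using MD by simp
      moreover have "(e + s) * v = (e + 1) * v + (s - 1) * v"
      proof -
        obtain t where t: "s = Suc t" using s by (cases s) auto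
        show ?thesis unfolding t by (simp add: algebra_simps)
      qed
      ultimately show ?thesis using s by linarith
    qed
  qed
qed



lemma cbound: assumes "j \<ge> 1" shows "(2*j choose j) < 4 ^ j"
proof -
  have "(2*j choose j) + (2*j choose 0) = (\<Sum>k\<in>{0,j}. 2*j choose k)" using assms by simp
  also have "\<dots> \<le> (\<Sum>k\<le>2*j. 2*j choose k)" by (rule sum_mono2) auto
  also have "\<dots> = 2 ^ (2*j)" by (rule choose_row_sum)
  also have "\<dots> = 4 ^ j" by (simp add: power_mult)
  finally show ?thesis by simp
qed

lemma pow94: assumes "j \<ge> 2" shows "(2*j+1) * 4 ^ j \<le> (9::nat) ^ j"
  using assms
proof (induction j rule: dec_induct)
  case base then show ?case by simp
next
  case (step m)
  have "(2*Suc m+1) * 4 ^ Suc m = 4 * (2*m+3) * 4^m" by (simp add: algebra_simps)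
  also have "\<dots> \<le> 9 * (2*m+1) * 4^m" using step by (intro mult_right_mono) auto
  also have "\<dots> = 9 * ((2*m+1) * 4^m)" by (simp add: algebra_simps)
  also have "\<dots> \<le> 9 * 9^m" using step.IH by (intro mult_left_mono) auto
  finally show ?case by simp
qed

lemma dbound: assumes "j \<ge> 1" shows "(2*j+1) * (2*j choose j) < 9 ^ j"
proof (cases "j = 1")
  case True then show ?thesis by (simp add: numeral_2_eq_2)
next
  case False
  then have "j \<ge> 2" using assms by simp
  have "(2*j+1) * (2*j choose j) < (2*j+1) * 4 ^ j" using cbound[OF assms] by (intro mult_strict_left_mono) auto
  also have "\<dots> \<le> 9 ^ j" using pow94[OF \<open>j \<ge> 2\<close>] .
  finally show ?thesis .
qed

lemma trinom_fact: assumes "2*k \<le> N"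
  shows "(N choose k) * ((N - k) choose k) * (fact k * fact k * fact (N - 2*k)) = (fact N :: nat)"
proof -
  have a: "fact k * fact (N - k) * (N choose k) = (fact N :: nat)" using assms by (intro binomial_fact_lemma) simp
  have b: "fact k * fact (N - k - k) * ((N - k) choose k) = (fact (N - k) :: nat)" using assms by (intro binomial_fact_lemma) simp
  have "N - k - k = N - 2*k" by simp
  then show ?thesis using a b by (metis mult.commute mult.left_commute)
qed

lemma idE: assumes "k \<le> n"
  shows "(2*n choose k) * ((2*n - k) choose k) * (2*(n-k) choose (n-k)) = (2*n choose n) * (n choose k)^2"
proof -
  define j where "j = n - k"
  have nkj: "n = k + j" using assms j_def by simp
  have t: "(2*n choose k) * ((2*n - k) choose k) * (fact k * fact k * fact (2*j)) = (fact (2*n) :: nat)"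
    using trinom_fact[of k "2*n"] assms nkj by simp
  have c: "fact j * fact (2*j - j) * (2*j choose j) = (fact (2*j) :: nat)" by (intro binomial_fact_lemma) simp
  have c2: "fact n * fact (2*n - n) * (2*n choose n) = (fact (2*n) :: nat)" by (intro binomial_fact_lemma) simp
  have c3: "fact k * fact (n - k) * (n choose k) = (fact n :: nat)" using assms by (intro binomial_fact_lemma)
  have "(2*n choose k) * ((2*n - k) choose k) * (2*j choose j) * (fact k * fact k * fact j * fact j)
      = (2*n choose k) * ((2*n - k) choose k) * (fact k * fact k * (fact j * fact j * (2*j choose j)))"
    by (simp add: algebra_simps)
  also have "\<dots> = fact (2*n)" using t c by simp
  also have "\<dots> = (2*n choose n) * (n choose k)^2 * (fact k * fact k * fact j * fact j)"
    using c2 c3 unfolding j_def by (simp add: power2_eq_square algebra_simps) (metis mult.commute mult.left_commute)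
  finally have "(2*n choose k) * ((2*n - k) choose k) * (2*j choose j) * (fact k * fact k * fact j * fact j)
     = (2*n choose n) * (n choose k)^2 * (fact k * fact k * fact j * fact j)" .
  then show ?thesis unfolding j_def by simp
qed

lemma idO: assumes "k \<le> n"
  shows "(2*n+1 choose k) * ((2*n+1 - k) choose k) * ((2*(n-k)+1) * (2*(n-k) choose (n-k)))
       = (2*n+1) * (2*n choose n) * (n choose k)^2"
proof -
  define j where "j = n - k"
  have nkj: "n = k + j" using assms j_def by simp
  have t: "(2*n+1 choose k) * ((2*n+1 - k) choose k) * (fact k * fact k * fact (2*j+1)) = (fact (2*n+1) :: nat)"
    using trinom_fact[of k "2*n+1"] assms nkj by simp
  have c: "fact j * fact (2*j - j) * (2*j choose j) = (fact (2*j) :: nat)" by (intro binomial_fact_lemma) simp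
  have c2: "fact n * fact (2*n - n) * (2*n choose n) = (fact (2*n) :: nat)" by (intro binomial_fact_lemma) simp
  have c3: "fact k * fact (n - k) * (n choose k) = (fact n :: nat)" using assms by (intro binomial_fact_lemma)
  have c': "fact (2*j) = fact j * fact j * (2*j choose j)" using c by simp
  have c2': "fact (2*n) = fact n * fact n * (2*n choose n)" using c2 by simp
  have c3': "fact n = fact k * fact j * (n choose k)" using c3 j_def by simp
  have f1: "fact (2*j+1) = (2*j+1) * (fact (2*j) :: nat)" by (simp add: fact_Suc)
  have f2: "fact (2*n+1) = (2*n+1) * (fact (2*n) :: nat)" by (simp add: fact_Suc)
  have f1': "fact (2*j+1) = (2*j+1) * (fact j * fact j * (2*j choose j))" using f1 c' by simp
  have "(2*n+1 choose k) * ((2*n+1 - k) choose k) * ((2*j+1) * (2*j choose j)) * (fact k * fact k * fact j * fact j)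
      = (2*n+1 choose k) * ((2*n+1 - k) choose k) * (fact k * fact k * ((2*j+1) * (fact j * fact j * (2*j choose j))))"
    by (simp only: mult_ac)
  also have "\<dots> = fact (2*n+1)" using t unfolding f1' .
  also have "\<dots> = (2*n+1) * (fact n * fact n * (2*n choose n))" using f2 c2' by simp
  also have "\<dots> = (2*n+1) * (2*n choose n) * (n choose k)^2 * (fact k * fact k * fact j * fact j)"
    unfolding c3' power2_eq_square by (simp only: mult_ac)
  finally have "(2*n+1 choose k) * ((2*n+1 - k) choose k) * ((2*j+1) * (2*j choose j)) * (fact k * fact k * fact j * fact j)
     = (2*n+1) * (2*n choose n) * (n choose k)^2 * (fact k * fact k * fact j * fact j)" .
  then show ?thesis unfolding j_def by simp
qed

lemma final:
  fixes a b c c0 S :: int and e n :: nat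
  assumes g: "gcd a b = 1" and b0: "b \<noteq> 0" and c0: "c0 = b ^ e * c" and nc: "\<not> b dvd c"
    and S: "b ^ (e + 1) dvd S"
  shows "multiplicity b (c0 * a ^ n + S) = e"
proof (rule multiplicity_eqI)
  have "b ^ e dvd S" using S by (metis dvd_trans le_add1 le_imp_power_dvd)
  then show "b ^ e dvd c0 * a ^ n + S" using c0 by simp
  show "\<not> b ^ Suc e dvd c0 * a ^ n + S"
  proof
    assume "b ^ Suc e dvd c0 * a ^ n + S"
    then have "b ^ Suc e dvd c0 * a ^ n" using S by (simp add: dvd_add_left_iff)
    then have "b ^ e * b dvd b ^ e * (c * a ^ n)" using c0 by (simp add: algebra_simps)
    then have "b dvd c * a ^ n" using b0 by simp
    moreover have "coprime b (a ^ n)" using g by (simp add: coprime_iff_gcd_eq_1[symmetric] coprime_commute)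
    ultimately have "b dvd c" using coprime_dvd_mult_left_iff by blast
    then show False using nc by simp
  qed
qed

lemma ndE: assumes p: "prime (p::int)" and j: "j \<ge> 1"
  shows "\<not> p ^ (2*j) dvd int (2*j choose j)"
proof
  assume h: "p ^ (2*j) dvd int (2*j choose j)"
  have pos: "int (2*j choose j) > 0" by simp
  have "p ^ (2*j) \<le> int (2*j choose j)" using zdvd_imp_le[OF h pos] .
  moreover have "(2::int) ^ (2*j) \<le> p ^ (2*j)" using prime_ge_2_int[OF p] by (intro power_mono) auto
  moreover have "int (2*j choose j) < 4 ^ j" using cbound[OF j] by (metis of_nat_less_iff of_nat_numeral of_nat_power)
  moreover have "(2::int) ^ (2*j) = 4 ^ j" by (simp add: power_mult)
  ultimately show False by linarith
qed

lemma ndO: assumes p: "prime (p::int)" and j: "j \<ge> 1"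
  shows "\<not> p ^ (2*j) dvd int ((2*j+1) * (2*j choose j))"
proof
  assume h: "p ^ (2*j) dvd int ((2*j+1) * (2*j choose j))"
  show False
  proof (cases "p = 2")
    case True
    have "coprime (2::int) (int (2*j+1))" by simp
    then have "coprime ((2::int) ^ (2*j)) (int (2*j+1))" by simp
    moreover have "(2::int) ^ (2*j) dvd int (2*j+1) * int (2*j choose j)" using h True by (simp only: of_nat_mult)
    ultimately have "(2::int) ^ (2*j) dvd int (2*j choose j)" using coprime_dvd_mult_right_iff by blast
    then show False using ndE[OF _ j, of 2] by simp
  next
    case False
    have p3: "p \<ge> 3" using prime_ge_2_int[OF p] False by simp
    have pos0: "(0::nat) < (2*j+1) * (2*j choose j)" by simp
    have pos: "int ((2*j+1) * (2*j choose j)) > 0" using pos0 by (simp only: of_nat_0_less_iff)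
    have "p ^ (2*j) \<le> int ((2*j+1) * (2*j choose j))" using zdvd_imp_le[OF h pos] .
    moreover have "(3::int) ^ (2*j) \<le> p ^ (2*j)" using p3 by (intro power_mono) auto
    moreover have "int ((2*j+1) * (2*j choose j)) < 9 ^ j" using dbound[OF j] by (metis of_nat_less_iff of_nat_numeral of_nat_power)
    moreover have "(3::int) ^ (2*j) = 9 ^ j" by (simp add: power_mult)
    ultimately show False by linarith
  qed
qed

lemma not_unit_b: fixes b :: int assumes "b \<noteq> 1" "b \<noteq> -1" shows "\<not> is_unit b"
  using assms zdvd1_eq[of b] by auto

theorem theorem8:
  fixes n :: nat and a b :: int
  assumes "gcd a b = 1" and "b \<noteq> 0" and "b \<noteq> 1" and "b \<noteq> -1"
  shows "omega b (gen_trinomial (2 * n) a b) = omega b (int ((2 * n) choose n)) \<and>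
         omega b (gen_trinomial (2 * n + 1) a b) = 1 + omega b (int (2 * n + 1) * int ((2 * n) choose n))"
proof
  have nu: "\<not> is_unit b" using assms(3,4) by (rule not_unit_b)
  have ins: "{0..n} = insert n {0..<n}" by auto
  define c0 where "c0 = int ((2 * n) choose n)"
  define e where "e = multiplicity b c0"
  have c0nz: "c0 \<noteq> 0" unfolding c0_def by simp
  obtain c where cc: "c0 = b ^ e * c" unfolding e_def using multiplicity_dvd by (metis dvdE)
  have nc: "\<not> b dvd c"
  proof
    assume "b dvd c"
    then have "b ^ Suc e dvd c0" using cc by simp
    then show False unfolding e_def using multiplicity_lessI by (metis power_dvd_iff_le_multiplicity[OF c0nz nu] Suc_n_not_le_n)
  qed
  define f where "f = (\<lambda>k. int ((2*n) choose k) * int ((2*n - k) choose k) * a ^ k * b ^ (2*n - 2*k))"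
  have d2: "(2*n) div 2 = n" by simp
  have "gen_trinomial (2*n) a b = (\<Sum>k\<in>{0..n}. f k)" unfolding gen_trinomial_def d2 f_def ..
  also have "\<dots> = f n + (\<Sum>k\<in>{0..<n}. f k)" unfolding ins by simp
  also have "f n = c0 * a ^ n" by (simp add: f_def c0_def)
  finally have T: "gen_trinomial (2*n) a b = c0 * a ^ n + (\<Sum>k\<in>{0..<n}. f k)" .
  have Sd: "b ^ (e + 1) dvd (\<Sum>k\<in>{0..<n}. f k)"
  proof (rule dvd_sum)
    fix k assume k: "k \<in> {0..<n}"
    define j where "j = n - k"
    have j1: "j \<ge> 1" and kn: "k \<le> n" using k j_def by auto
    have eq: "f k * int (2*j choose j) = b ^ (e + 2*j) * (c * int (n choose k) ^ 2 * a ^ k)"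
    proof -
      have "f k * int (2*j choose j) = int ((2*n choose k) * ((2*n - k) choose k) * (2*(n-k) choose (n-k))) * a ^ k * b ^ (2*j)"
        unfolding f_def j_def by (simp add: algebra_simps)
      also have "\<dots> = c0 * int (n choose k) ^ 2 * a ^ k * b ^ (2*j)"
        unfolding idE[OF kn] c0_def by simp
      also have "\<dots> = b ^ (e + 2*j) * (c * int (n choose k) ^ 2 * a ^ k)"
        unfolding cc by (simp add: power_add algebra_simps)
      finally show ?thesis .
    qed
    show "b ^ (e + 1) dvd f k"
      by (rule key[OF eq _ _ _ assms(2)]) (use j1 ndE in auto)
  qed
  show "omega b (gen_trinomial (2 * n) a b) = omega b (int ((2 * n) choose n))"
    unfolding T using final[OF assms(1,2) cc nc Sd] e_def c0_def by simp
next
  have nu: "\<not> is_unit b" using assms(3,4) by (rule not_unit_b)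
  have ins: "{0..n} = insert n {0..<n}" by auto
  define c1 where "c1 = int (2 * n + 1) * int ((2 * n) choose n)"
  define e where "e = multiplicity b c1"
  have c1nz: "c1 \<noteq> 0" unfolding c1_def by simp
  obtain c where cc: "c1 = b ^ e * c" unfolding e_def using multiplicity_dvd by (metis dvdE)
  have nc: "\<not> b dvd c"
  proof
    assume "b dvd c"
    then have "b ^ Suc e dvd c1" using cc by simp
    then show False unfolding e_def using multiplicity_lessI by (metis power_dvd_iff_le_multiplicity[OF c1nz nu] Suc_n_not_le_n)
  qed
  have cc': "b * c1 = b ^ (e + 1) * c" using cc by simp
  define f where "f = (\<lambda>k. int ((2*n+1) choose k) * int ((2*n+1 - k) choose k) * a ^ k * b ^ (2*n+1 - 2*k))"
  have div2: "(2*n+1) div 2 = n" by simp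
  have top: "int ((2*n+1) choose n) * int ((2*n+1 - n) choose n) = c1"
  proof -
    have "((2*n+1) choose n) * ((2*n+1 - n) choose n) = (2*n+1) * (2*n choose n)"
      using idO[of n n] by simp
    then show ?thesis unfolding c1_def by (metis of_nat_mult)
  qed
  have "gen_trinomial (2*n+1) a b = (\<Sum>k\<in>{0..n}. f k)" unfolding gen_trinomial_def div2 f_def ..
  also have "\<dots> = f n + (\<Sum>k\<in>{0..<n}. f k)" unfolding ins by simp
  also have "f n = (b * c1) * a ^ n" unfolding f_def top[symmetric] by (simp add: algebra_simps)
  finally have T: "gen_trinomial (2*n+1) a b = (b * c1) * a ^ n + (\<Sum>k\<in>{0..<n}. f k)" .
  have Sd: "b ^ (e + 1 + 1) dvd (\<Sum>k\<in>{0..<n}. f k)"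
  proof (rule dvd_sum)
    fix k assume k: "k \<in> {0..<n}"
    define j where "j = n - k"
    have j1: "j \<ge> 1" and kn: "k \<le> n" using k j_def by auto
    have ex: "2*n+1 - 2*k = 2*j+1" using kn j_def by simp
    have idj: "(2*n+1 choose k) * ((2*n+1 - k) choose k) * ((2*j+1) * (2*j choose j)) = (2*n+1) * (2*n choose n) * (n choose k)^2"
      using idO[OF kn] unfolding j_def .
    have idj': "int (2*n+1 choose k) * int ((2*n+1 - k) choose k) * int ((2*j+1) * (2*j choose j)) = c1 * int (n choose k)^2"
      unfolding c1_def using arg_cong[OF idj, of int] by (simp only: of_nat_mult of_nat_power)
    have eq: "f k * int ((2*j+1) * (2*j choose j)) = b ^ ((e + 1) + 2*j) * (c * int (n choose k) ^ 2 * a ^ k)"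
    proof -
      have "f k * int ((2*j+1) * (2*j choose j)) = (int (2*n+1 choose k) * int ((2*n+1 - k) choose k) * int ((2*j+1) * (2*j choose j))) * a ^ k * b ^ (2*j+1)"
        unfolding f_def ex by (simp only: mult_ac)
      also have "\<dots> = c1 * int (n choose k) ^ 2 * a ^ k * b ^ (2*j+1)"
        unfolding idj' ..
      also have "\<dots> = b ^ ((e + 1) + 2*j) * (c * int (n choose k) ^ 2 * a ^ k)"
        unfolding cc by (simp add: power_add algebra_simps)
      finally show ?thesis .
    qed
    have pos0: "(0::nat) < (2*j+1) * (2*j choose j)" by simp
    have pos: "int ((2*j+1) * (2*j choose j)) > 0" using pos0 by (simp only: of_nat_0_less_iff)
    have "2 * j \<ge> 1" using j1 by simp
    from key[OF eq pos this _ assms(2)] show "b ^ (e + 1 + 1) dvd f k"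
      using ndO[OF _ j1] by blast
  qed
  have "multiplicity b ((b * c1) * a ^ n + (\<Sum>k\<in>{0..<n}. f k)) = e + 1"
    by (rule final[OF assms(1,2) cc' nc Sd])
  then have "omega b (gen_trinomial (2*n+1) a b) = e + 1"
    by (simp only: T)
  then show "omega b (gen_trinomial (2 * n + 1) a b) = 1 + omega b (int (2 * n + 1) * int ((2 * n) choose n))"
    by (simp only: e_def c1_def add.commute)
qed

end
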